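(* The Galois structure $\Gamma=(\mathsf{PreOrdGrp},\mathsf{Mono(Ab)},F,U,\mathscr{E},\mathscr{Z})$ is admissible; that is, for every preordered group $B$, every object $X$ of $\mathsf{Mono(Ab)}$ and every regular epimorphism $\phi\colon X\to F(B)$ in $\mathsf{Mono(Ab)}$, the functor $F$ sends the pullback in $\mathsf{PreOrdGrp}$ of $U(\phi)$ along the unit $\eta_B\colon B\to UF(B)$ to a pullback in $\mathsf{Mono(Ab)}$.
   Context: A preordered group is a pair $(G,P_G)$ with $G$ an additively written group and $P_G\subseteq G$ a submonoid closed under conjugation; morphisms are group homomorphisms $f$ with $f(P_G)\subseteq P_H$. This is $\mathsf{PreOrdGrp}$; limits are computed componentwise. $\mathsf{Mono(Ab)}$ is the full subcategory of $(G,P_G)$ with $G$ abelian and $P_G$ a subgroup, $U$ its inclusion, and $F$ its left adjoint: $F(G,P_G)=(G/[G,G],\{x-y: x,y\in\eta_G(P_G)\})$, $\eta_G$ the abelianization quotient, unit induced by $\eta_G$; the counit of $F\dashv U$ is an isomorphism. $\mathscr E$ (resp. $\mathscr Z$) is the class of regular epimorphisms in $\mathsf{PreOrdGrp}$ (resp. $\mathsf{Mono(Ab)}$), i.e. morphisms $(f,\bar f)$ with $f$ and its restriction $\bar f$ to positive cones both surjective. A Galois structure $(\mathscr C,\mathscr F,F,U,\mathscr E,\mathscr Z)$ is admissible when for every $B$ the counit of the induced adjunction between $\mathscr E$-extensions of $B$ and $\mathscr Z$-extensions of $F(B)$ (right adjoint: pullback of $U(\phi)$ along $\eta_B$) is an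 isomorphism; when the counit of $F\dashv U$ is an isomorphism this is equivalent to the pullback-preservation condition in the claim. *)

theory Defs
  imports "HOL-Algebra.Algebra"
begin

text \<open>Preordered groups are written multiplicatively here (HOL-Algebra groups);
  a preordered group is a pair (G, P) given as two arguments.\<close>

definition preord_group :: "('a, 'b) monoid_scheme \<Rightarrow> 'a set \<Rightarrow> bool" where
  "preord_group G P \<longleftrightarrow> group G \<and> submonoid P G \<and>
     (\<forall>g\<in>carrier G. \<forall>p\<in>P. g \<otimes>\<^bsub>G\<^esub> p \<otimes>\<^bsub>G\<^esub> inv\<^bsub>G\<^esub> g \<in> P)"

definition monoab :: "('a, 'b) monoid_scheme \<Rightarrow> 'a set \<Rightarrow> bool" where
  "monoab G P \<longleftrightarrow> preord_group G P \<and> comm_group G \<and> subgroup P G"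

definition pg_mor :: "('a, 'b) monoid_scheme \<Rightarrow> 'a set \<Rightarrow> ('c, 'd) monoid_scheme \<Rightarrow> 'c set
    \<Rightarrow> ('a \<Rightarrow> 'c) \<Rightarrow> bool" where
  "pg_mor G P H Q f \<longleftrightarrow> f \<in> hom G H \<and> f ` P \<subseteq> Q"

definition pg_regepi :: "('a, 'b) monoid_scheme \<Rightarrow> 'a set \<Rightarrow> ('c, 'd) monoid_scheme \<Rightarrow> 'c set
    \<Rightarrow> ('a \<Rightarrow> 'c) \<Rightarrow> bool" where
  "pg_regepi G P H Q f \<longleftrightarrow> pg_mor G P H Q f \<and> f ` carrier G = carrier H \<and> f ` P = Q"

definition pg_iso :: "('a, 'b) monoid_scheme \<Rightarrow> 'a set \<Rightarrow> ('c, 'd) monoid_scheme \<Rightarrow> 'c set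
    \<Rightarrow> ('a \<Rightarrow> 'c) \<Rightarrow> bool" where
  "pg_iso G P H Q f \<longleftrightarrow> f \<in> hom G H \<and> bij_betw f (carrier G) (carrier H) \<and> f ` P = Q"

definition Fobj :: "('a, 'b) monoid_scheme \<Rightarrow> 'a set monoid" where
  "Fobj G = G Mod (derived G (carrier G))"

definition Funit :: "('a, 'b) monoid_scheme \<Rightarrow> 'a \<Rightarrow> 'a set" where
  "Funit G x = r_coset G (derived G (carrier G)) x"

definition Fcone :: "('a, 'b) monoid_scheme \<Rightarrow> 'a set \<Rightarrow> 'a set set" where
  "Fcone G P = {x \<otimes>\<^bsub>Fobj G\<^esub> inv\<^bsub>Fobj G\<^esub> y | x y. x \<in> Funit G ` P \<and> y \<in> Funit G ` P}"

definition Fmor :: "('c, 'd) monoid_scheme \<Rightarrow> ('a \<Rightarrow> 'c) \<Rightarrow> 'a set \<Rightarrow> 'c set" where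
  "Fmor H f C = Funit H (f (SOME x. x \<in> C))"

definition pb :: "('a, 'b) monoid_scheme \<Rightarrow> ('c, 'd) monoid_scheme \<Rightarrow> ('a \<Rightarrow> 'z) \<Rightarrow> ('c \<Rightarrow> 'z)
    \<Rightarrow> ('a \<times> 'c) monoid" where
  "pb G H f g = (G \<times>\<times> H)\<lparr>carrier := {(b, x). b \<in> carrier G \<and> x \<in> carrier H \<and> f b = g x}\<rparr>"

definition pb_cone :: "'a set \<Rightarrow> 'c set \<Rightarrow> ('a \<Rightarrow> 'z) \<Rightarrow> ('c \<Rightarrow> 'z) \<Rightarrow> ('a \<times> 'c) set" where
  "pb_cone PB PX f g = {(b, x). b \<in> PB \<and> x \<in> PX \<and> f b = g x}"

end

theory Submission
  imports Defs
begin

lemma funit_hom: assumes "group G" shows "group_hom G (Fobj G) (Funit G)"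
proof -
  have n: "derived G (carrier G) \<lhd> G" by (rule group.derived_self_is_normal[OF assms])
  show ?thesis unfolding group_hom_def group_hom_axioms_def Funit_def[abs_def] Fobj_def
    using normal.r_coset_hom_Mod[OF n] normal.factorgroup_is_group[OF n] assms by simp
qed

lemma funit_comm: assumes "comm_group G" "x \<in> carrier G" shows "Funit G x = {x}"
proof -
  interpret comm_group G by fact
  have "derived G (carrier G) = {\<one>\<^bsub>G\<^esub>}" by (rule derived_eq_singleton) simp
  then show ?thesis using assms(2) by (simp add: Funit_def r_coset_def)
qed

lemma fcone_eq: assumes "group G" "PG \<subseteq> carrier G"
  shows "Fcone G PG = {Funit G (x \<otimes>\<^bsub>G\<^esub> inv\<^bsub>G\<^esub> y) | x y. x \<in> PG \<and> y \<in> PG}"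
proof -
  interpret h: group_hom G "Fobj G" "Funit G" by (rule funit_hom[OF assms(1)])
  have "Funit G (x \<otimes>\<^bsub>G\<^esub> inv\<^bsub>G\<^esub> y) = Funit G x \<otimes>\<^bsub>Fobj G\<^esub> inv\<^bsub>Fobj G\<^esub> Funit G y"
    if "x \<in> PG" "y \<in> PG" for x y
  proof -
    have xy: "x \<in> carrier G" "y \<in> carrier G" using that assms(2) by auto
    have "Funit G (x \<otimes>\<^bsub>G\<^esub> inv\<^bsub>G\<^esub> y) = Funit G x \<otimes>\<^bsub>Fobj G\<^esub> Funit G (inv\<^bsub>G\<^esub> y)"
      using xy by (intro h.hom_mult) auto
    then show ?thesis using xy h.hom_inv by simp
  qed
  then show ?thesis unfolding Fcone_def by blast
qed

lemma funit_eq_iff: assumes "group G" "x \<in> carrier G" "y \<in> carrier G"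
  shows "Funit G x = Funit G y \<longleftrightarrow> x \<otimes>\<^bsub>G\<^esub> inv\<^bsub>G\<^esub> y \<in> derived G (carrier G)"
proof -
  interpret group G by fact
  interpret D: subgroup "derived G (carrier G)" G by (rule derived_is_subgroup) simp
  show ?thesis
  proof
    assume "Funit G x = Funit G y"
    then have "x \<in> derived G (carrier G) #>\<^bsub>G\<^esub> y"
      using rcos_self[OF assms(2) D.subgroup_axioms] by (simp add: Funit_def)
    then show "x \<otimes>\<^bsub>G\<^esub> inv\<^bsub>G\<^esub> y \<in> derived G (carrier G)" using D.rcos_module_imp assms by blast
  next
    assume "x \<otimes>\<^bsub>G\<^esub> inv\<^bsub>G\<^esub> y \<in> derived G (carrier G)"
    then have "x \<in> derived G (carrier G) #>\<^bsub>G\<^esub> y" using D.rcos_module_rev assms by blast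
    then show "Funit G x = Funit G y" unfolding Funit_def
      using repr_independence[OF _ assms(3) D.subgroup_axioms] by simp
  qed
qed

theorem corollary5p5:
  fixes B :: "('a, 'm) monoid_scheme" and PB :: "'a set"
    and A :: "('c, 'n) monoid_scheme" and PA :: "'c set"
    and \<phi> :: "'c \<Rightarrow> 'a set"
  assumes B: "preord_group B PB"
    and A: "monoab A PA"
    and \<phi>: "pg_regepi A PA (Fobj B) (Fcone B PB) \<phi>"
  shows "pg_iso
           (Fobj (pb B A (Funit B) \<phi>)) (Fcone (pb B A (Funit B) \<phi>) (pb_cone PB PA (Funit B) \<phi>))
           (pb (Fobj B) (Fobj A) (Fmor (Fobj B) (Funit B)) (Fmor (Fobj B) \<phi>))
           (pb_cone (Fcone B PB) (Fcone A PA) (Fmor (Fobj B) (Funit B)) (Fmor (Fobj B) \<phi>))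
           (\<lambda>c. (Fmor B fst c, Fmor A snd c))"
proof -
  define DB where "DB = derived B (carrier B)"
  define FB where "FB = Fobj B"
  define P where "P = pb B A (Funit B) \<phi>"
  define PP where "PP = pb_cone PB PA (Funit B) \<phi>"
  define f where "f = Fmor FB (Funit B)"
  define g where "g = Fmor FB \<phi>"
  define T where "T = pb FB (Fobj A) f g"
  define TC where "TC = pb_cone (Fcone B PB) (Fcone A PA) f g"
  define psi where "psi = (\<lambda>c. (Fmor B fst c, Fmor A snd c))"
  define S where "S = {(b, x). b \<in> carrier B \<and> x \<in> carrier A \<and> Funit B b = \<phi> x}"
  have gB: "group B" using B by (simp add: preord_group_def)
  interpret GB: group B by (rule gB)
  have smB: "submonoid PB B" using B by (simp add: preord_group_def)
  have PBsub: "PB \<subseteq> carrier B" using submonoid.subset[OF smB] .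
  have cA: "comm_group A" and sPA: "subgroup PA A" using A by (auto simp: monoab_def)
  interpret GA: comm_group A by (rule cA)
  have gA: "group A" by (rule GA.is_group)
  interpret SPA: subgroup PA A by (rule sPA)
  have hB: "group_hom B FB (Funit B)" unfolding FB_def by (rule funit_hom[OF gB])
  interpret HB: group_hom B FB "Funit B" by (rule hB)
  have cFB: "comm_group FB" unfolding FB_def Fobj_def by (rule GB.derived_quot_is_comm_group)
  have gFB: "group FB" using cFB comm_group.axioms(2) by blast
  have hphi: "\<phi> \<in> hom A FB" and surjphi: "\<phi> ` carrier A = carrier FB"
    and conephi: "\<phi> ` PA = Fcone B PB"
    using \<phi> by (auto simp: pg_regepi_def pg_mor_def FB_def)
  interpret HPHI: group_hom A FB \<phi> using gA gFB hphi
    by (simp add: group_hom_def group_hom_axioms_def)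
  have carrFB: "carrier FB = Funit B ` carrier B"
    by (simp add: FB_def Fobj_def carrier_FactGroup Funit_def[abs_def])
  have hA: "group_hom A (Fobj A) (Funit A)" by (rule funit_hom[OF gA])
  interpret HA: group_hom A "Fobj A" "Funit A" by (rule hA)
  have P_eq: "P = (B \<times>\<times> A)\<lparr>carrier := S\<rparr>" by (simp add: P_def pb_def S_def)
  have subS: "subgroup S (B \<times>\<times> A)"
  proof (rule subgroup.intro)
    show "S \<subseteq> carrier (B \<times>\<times> A)" by (auto simp: S_def)
    show "x \<otimes>\<^bsub>B \<times>\<times> A\<^esub> y \<in> S" if "x \<in> S" "y \<in> S" for x y
      using that by (auto simp: S_def mult_DirProd' HB.hom_mult HPHI.hom_mult)
    show "\<one>\<^bsub>B \<times>\<times> A\<^esub> \<in> S" by (simp add: S_def)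
    show "inv\<^bsub>B \<times>\<times> A\<^esub> x \<in> S" if "x \<in> S" for x
      using that by (auto simp: S_def inv_DirProd[OF gB gA] HB.hom_inv HPHI.hom_inv)
  qed
  have gP: "group P" unfolding P_eq by (rule subgroup.subgroup_is_group[OF subS DirProd_group[OF gB gA]])
  interpret GP: group P by (rule gP)
  have carrP: "carrier P = S" by (simp add: P_eq)
  have multP: "x \<otimes>\<^bsub>P\<^esub> y = (fst x \<otimes>\<^bsub>B\<^esub> fst y, snd x \<otimes>\<^bsub>A\<^esub> snd y)" for x y
    by (simp add: P_eq mult_DirProd')
  have hfst: "group_hom P B fst" using gP gB
    by (auto simp: group_hom_def group_hom_axioms_def hom_def multP carrP S_def)
  interpret HF: group_hom P B fst by (rule hfst)
  have hsnd: "group_hom P A snd" using gP gA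
    by (auto simp: group_hom_def group_hom_axioms_def hom_def multP carrP S_def)
  interpret HS: group_hom P A snd by (rule hsnd)
  have fsurj: "fst ` carrier P = carrier B"
  proof
    show "fst ` carrier P \<subseteq> carrier B" by (auto simp: carrP S_def)
    show "carrier B \<subseteq> fst ` carrier P"
    proof
      fix b assume b: "b \<in> carrier B"
      then have "Funit B b \<in> \<phi> ` carrier A" using surjphi by simp
      then obtain x where "x \<in> carrier A" "\<phi> x = Funit B b" by blast
      then have "(b, x) \<in> carrier P" using b by (simp add: carrP S_def)
      then show "b \<in> fst ` carrier P" by force
    qed
  qed
  have ssurj: "snd ` carrier P = carrier A"
  proof
    show "snd ` carrier P \<subseteq> carrier A" by (auto simp: carrP S_def)
    show "carrier A \<subseteq> snd ` carrier P"
    proof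
      fix x assume x: "x \<in> carrier A"
      then have "\<phi> x \<in> Funit B ` carrier B" using carrFB HPHI.hom_closed[OF x] by argo
      then obtain b where "b \<in> carrier B" "Funit B b = \<phi> x" by (metis imageE)
      then have "(b, x) \<in> carrier P" using x by (simp add: carrP S_def)
      then show "x \<in> snd ` carrier P" by force
    qed
  qed
  define DP where "DP = derived P (carrier P)"
  have DPsub: "DP \<subseteq> carrier P" unfolding DP_def by (rule GP.derived_in_carrier) simp
  have fDP: "fst ` DP = DB"
    using HF.derived_img[of "carrier P"] fsurj by (simp add: DP_def DB_def)
  have dA: "derived A (carrier A) = {\<one>\<^bsub>A\<^esub>}" by (rule GA.derived_eq_singleton) simp
  have sDP: "snd ` DP = {\<one>\<^bsub>A\<^esub>}"
    using HS.derived_img[of "carrier P"] ssurj dA by (simp add: DP_def)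
  have key1: "(d, \<one>\<^bsub>A\<^esub>) \<in> DP" if d: "d \<in> DB" for d
  proof -
    have "d \<in> fst ` DP" using d fDP by simp
    then obtain p where p: "p \<in> DP" "fst p = d" by blast
    then have "snd p = \<one>\<^bsub>A\<^esub>" using sDP by force
    then show ?thesis using p by (metis prod.collapse)
  qed
  have key2: "fst p \<in> DB" "snd p = \<one>\<^bsub>A\<^esub>" if "p \<in> DP" for p
    using that fDP sDP by force+
  have hP: "group_hom P (Fobj P) (Funit P)" by (rule funit_hom[OF gP])
  interpret HP: group_hom P "Fobj P" "Funit P" by (rule hP)
  have carrFP: "carrier (Fobj P) = Funit P ` carrier P"
    by (simp add: Fobj_def carrier_FactGroup Funit_def[abs_def])
  have sDPg: "subgroup DP P" unfolding DP_def by (rule GP.derived_is_subgroup) simp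
  have sDBg: "subgroup DB B" unfolding DB_def by (rule GB.derived_is_subgroup) simp
  have comp: "psi (Funit P p) = (\<phi> (snd p), {snd p})" if p: "p \<in> carrier P" for p
  proof -
    have pc: "p \<in> Funit P p" unfolding Funit_def
      using GP.rcos_self[OF p sDPg] by (simp add: DP_def)
    define q where "q = (SOME q. q \<in> Funit P p)"
    have qc: "q \<in> Funit P p" unfolding q_def using pc by (rule someI)
    have qP: "q \<in> carrier P" using qc GP.r_coset_subset_G[OF DPsub p] by (auto simp: Funit_def DP_def)
    have "Funit P q = Funit P p" unfolding Funit_def
      using GP.repr_independence[OF _ p sDPg] qc by (simp add: Funit_def DP_def)
    then have r: "q \<otimes>\<^bsub>P\<^esub> inv\<^bsub>P\<^esub> p \<in> DP" using funit_eq_iff[OF gP qP p] by (simp add: DP_def)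
    have r1: "fst (q \<otimes>\<^bsub>P\<^esub> inv\<^bsub>P\<^esub> p) = fst q \<otimes>\<^bsub>B\<^esub> inv\<^bsub>B\<^esub> fst p"
      using qP p by (simp add: HF.hom_mult HF.hom_inv)
    have r2: "snd (q \<otimes>\<^bsub>P\<^esub> inv\<^bsub>P\<^esub> p) = snd q \<otimes>\<^bsub>A\<^esub> inv\<^bsub>A\<^esub> snd p"
      using qP p by (simp add: HS.hom_mult HS.hom_inv)
    have k1: "fst q \<otimes>\<^bsub>B\<^esub> inv\<^bsub>B\<^esub> fst p \<in> DB" using key2(1)[OF r] r1 by simp
    have k2: "snd q \<otimes>\<^bsub>A\<^esub> inv\<^bsub>A\<^esub> snd p \<in> derived A (carrier A)" using key2(2)[OF r] r2 dA by simp
    have e1: "Funit B (fst q) = Funit B (fst p)"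
      using funit_eq_iff[OF gB] k1 qP p by (simp add: DB_def)
    have e2: "Funit A (snd q) = Funit A (snd p)"
      using funit_eq_iff[OF gA] k2 qP p by simp
    have "psi (Funit P p) = (Funit B (fst q), Funit A (snd q))"
      by (simp add: psi_def Fmor_def q_def)
    also have "\<dots> = (\<phi> (snd p), {snd p})"
      using e1 e2 p funit_comm[OF cA] by (auto simp: carrP S_def)
    finally show ?thesis .
  qed
  have fC: "f C = {C}" if C: "C \<in> carrier FB" for C
  proof -
    obtain b where b: "b \<in> carrier B" "C = Funit B b" using C carrFB by auto
    have bc: "b \<in> C" unfolding b Funit_def using GB.rcos_self[OF b(1) sDBg] by (simp add: DB_def)
    define x where "x = (SOME x. x \<in> C)"
    have xc: "x \<in> C" unfolding x_def using bc by (rule someI)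
    have "Funit B x = C" unfolding b Funit_def
      using GB.repr_independence[OF _ b(1) sDBg] xc b by (simp add: Funit_def DB_def)
    then show ?thesis using funit_comm[OF cFB C] by (simp add: f_def Fmor_def x_def)
  qed
  have gE: "g {a} = {\<phi> a}" if "a \<in> carrier A" for a
    using that funit_comm[OF cFB] by (simp add: g_def Fmor_def)
  have carrFA: "carrier (Fobj A) = (\<lambda>a. {a}) ` carrier A"
    using funit_comm[OF cA] by (simp add: Fobj_def carrier_FactGroup Funit_def[symmetric])
  have carrT: "carrier T = (\<lambda>a. (\<phi> a, {a})) ` carrier A"
  proof -
    have "carrier T = {(C, E). C \<in> carrier FB \<and> E \<in> carrier (Fobj A) \<and> f C = g E}"
      by (simp add: T_def pb_def)
    also have "\<dots> = (\<lambda>a. (\<phi> a, {a})) ` carrier A"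
      using fC gE carrFA by auto
    finally show ?thesis .
  qed

  have multT: "(C1, E1) \<otimes>\<^bsub>T\<^esub> (C2, E2) = (C1 \<otimes>\<^bsub>FB\<^esub> C2, E1 \<otimes>\<^bsub>Fobj A\<^esub> E2)" for C1 E1 C2 E2
    by (simp add: T_def pb_def)
  have singmult: "{a1} \<otimes>\<^bsub>Fobj A\<^esub> {a2} = {a1 \<otimes>\<^bsub>A\<^esub> a2}" if "a1 \<in> carrier A" "a2 \<in> carrier A" for a1 a2
  proof -
    have "Funit A (a1 \<otimes>\<^bsub>A\<^esub> a2) = Funit A a1 \<otimes>\<^bsub>Fobj A\<^esub> Funit A a2" using that by simp
    then show ?thesis using that funit_comm[OF cA] by simp
  qed
  have sndP: "snd p \<in> carrier A" if "p \<in> carrier P" for p using that by simp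
  have homT: "psi \<in> hom (Fobj P) T"
  proof (rule homI)
    fix c assume "c \<in> carrier (Fobj P)"
    then have "c \<in> Funit P ` carrier P" using carrFP by simp
    then obtain p where p: "p \<in> carrier P" "c = Funit P p" by (metis imageE)
    have "psi c = (\<phi> (snd p), {snd p})" using comp p by simp
    then show "psi c \<in> carrier T" unfolding carrT using sndP[OF p(1)] by blast
  next
    fix c1 c2 assume "c1 \<in> carrier (Fobj P)" "c2 \<in> carrier (Fobj P)"
    then have "c1 \<in> Funit P ` carrier P" "c2 \<in> Funit P ` carrier P" using carrFP by simp_all
    then obtain p1 p2 where p: "p1 \<in> carrier P" "c1 = Funit P p1" "p2 \<in> carrier P" "c2 = Funit P p2"
      by (metis imageE)
    have "c1 \<otimes>\<^bsub>Fobj P\<^esub> c2 = Funit P (p1 \<otimes>\<^bsub>P\<^esub> p2)" using p by simp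
    then have "psi (c1 \<otimes>\<^bsub>Fobj P\<^esub> c2) = (\<phi> (snd p1 \<otimes>\<^bsub>A\<^esub> snd p2), {snd p1 \<otimes>\<^bsub>A\<^esub> snd p2})"
      using comp[of "p1 \<otimes>\<^bsub>P\<^esub> p2"] p by simp
    also have "\<dots> = (\<phi> (snd p1), {snd p1}) \<otimes>\<^bsub>T\<^esub> (\<phi> (snd p2), {snd p2})"
      using p sndP singmult multT by simp
    also have "\<dots> = psi c1 \<otimes>\<^bsub>T\<^esub> psi c2" using p comp by simp
    finally show "psi (c1 \<otimes>\<^bsub>Fobj P\<^esub> c2) = psi c1 \<otimes>\<^bsub>T\<^esub> psi c2" .
  qed
  have fstP: "Funit B (fst p) = \<phi> (snd p)" "fst p \<in> carrier B" if "p \<in> carrier P" for p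
    using that by (auto simp: carrP S_def)
  have inj: "inj_on psi (carrier (Fobj P))"
  proof (rule inj_onI)
    fix c1 c2 assume "c1 \<in> carrier (Fobj P)" "c2 \<in> carrier (Fobj P)" and eq: "psi c1 = psi c2"
    then have "c1 \<in> Funit P ` carrier P" "c2 \<in> Funit P ` carrier P" using carrFP by simp_all
    then obtain p1 p2 where p: "p1 \<in> carrier P" "c1 = Funit P p1" "p2 \<in> carrier P" "c2 = Funit P p2"
      by (metis imageE)
    have a: "snd p1 = snd p2" using eq comp p by simp
    have "Funit B (fst p1) = Funit B (fst p2)" using fstP p a by simp
    then have d: "fst p1 \<otimes>\<^bsub>B\<^esub> inv\<^bsub>B\<^esub> fst p2 \<in> DB"
      using funit_eq_iff[OF gB fstP(2)[OF p(1)] fstP(2)[OF p(3)]] by (simp add: DB_def)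
    define r where "r = p1 \<otimes>\<^bsub>P\<^esub> inv\<^bsub>P\<^esub> p2"
    have r1: "fst r = fst p1 \<otimes>\<^bsub>B\<^esub> inv\<^bsub>B\<^esub> fst p2"
      using p by (simp add: r_def HF.hom_mult HF.hom_inv)
    have r2: "snd r = \<one>\<^bsub>A\<^esub>"
      using p a sndP by (simp add: r_def HS.hom_mult HS.hom_inv)
    have "r = (fst r, \<one>\<^bsub>A\<^esub>)" using r2 by (metis prod.collapse)
    then have "r \<in> DP" using key1[OF d] r1 by simp
    then show "c1 = c2" using funit_eq_iff[OF gP p(1) p(3)] p by (simp add: r_def DP_def)
  qed
  have surj: "psi ` carrier (Fobj P) = carrier T"
  proof
    show "psi ` carrier (Fobj P) \<subseteq> carrier T" using homT by (auto simp: hom_def)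
    show "carrier T \<subseteq> psi ` carrier (Fobj P)"
    proof
      fix t assume "t \<in> carrier T"
      then obtain a where a: "a \<in> carrier A" "t = (\<phi> a, {a})" using carrT by blast
      then have "\<phi> a \<in> Funit B ` carrier B" using carrFB HPHI.hom_closed[OF a(1)] by argo
      then obtain b where b: "b \<in> carrier B" "Funit B b = \<phi> a" by (metis imageE)
      then have bp: "(b, a) \<in> carrier P" using a by (simp add: carrP S_def)
      then have "psi (Funit P (b, a)) = t" using comp a by simp
      moreover have "Funit P (b, a) \<in> carrier (Fobj P)" using bp carrFP by blast
      ultimately show "t \<in> psi ` carrier (Fobj P)" by blast
    qed
  qed
  have PPsub: "PP \<subseteq> carrier P"
    using PBsub SPA.subset by (auto simp: PP_def pb_cone_def carrP S_def)
  have FconeP: "Fcone P PP = {Funit P (p \<otimes>\<^bsub>P\<^esub> inv\<^bsub>P\<^esub> q) | p q. p \<in> PP \<and> q \<in> PP}"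
    by (rule fcone_eq[OF gP PPsub])
  have FconeA: "Fcone A PA = (\<lambda>a. {a}) ` PA"
  proof -
    have "Fcone A PA = {Funit A (x \<otimes>\<^bsub>A\<^esub> inv\<^bsub>A\<^esub> y) | x y. x \<in> PA \<and> y \<in> PA}"
      by (rule fcone_eq[OF gA SPA.subset])
    also have "\<dots> = {{x \<otimes>\<^bsub>A\<^esub> inv\<^bsub>A\<^esub> y} | x y. x \<in> PA \<and> y \<in> PA}"
      using funit_comm[OF cA] SPA.subset by (metis (no_types, opaque_lifting) GA.inv_closed GA.m_closed subsetD)
    also have "\<dots> = (\<lambda>a. {a}) ` PA"
    proof
      show "{{x \<otimes>\<^bsub>A\<^esub> inv\<^bsub>A\<^esub> y} | x y. x \<in> PA \<and> y \<in> PA} \<subseteq> (\<lambda>a. {a}) ` PA" by auto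
      show "(\<lambda>a. {a}) ` PA \<subseteq> {{x \<otimes>\<^bsub>A\<^esub> inv\<^bsub>A\<^esub> y} | x y. x \<in> PA \<and> y \<in> PA}"
      proof
        fix E assume "E \<in> (\<lambda>a. {a}) ` PA"
        then obtain a where a: "a \<in> PA" "E = {a}" by blast
        then have "E = {a \<otimes>\<^bsub>A\<^esub> inv\<^bsub>A\<^esub> \<one>\<^bsub>A\<^esub>}" using SPA.subset by auto
        then show "E \<in> {{x \<otimes>\<^bsub>A\<^esub> inv\<^bsub>A\<^esub> y} | x y. x \<in> PA \<and> y \<in> PA}" using a SPA.one_closed by blast
      qed
    qed
    finally show ?thesis .
  qed
  have FBsub: "Fcone B PB \<subseteq> carrier FB" unfolding conephi[symmetric] using SPA.subset by auto
  have TCeq: "TC = (\<lambda>a. (\<phi> a, {a})) ` PA"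
  proof
    show "TC \<subseteq> (\<lambda>a. (\<phi> a, {a})) ` PA"
    proof
      fix t assume "t \<in> TC"
      then obtain C a where t: "t = (C, {a})" "C \<in> Fcone B PB" "a \<in> PA" "f C = g {a}"
        by (auto simp: TC_def pb_cone_def FconeA)
      then have "C = \<phi> a" using fC FBsub gE SPA.subset by auto
      then show "t \<in> (\<lambda>a. (\<phi> a, {a})) ` PA" using t by blast
    qed
    show "(\<lambda>a. (\<phi> a, {a})) ` PA \<subseteq> TC"
    proof
      fix t assume "t \<in> (\<lambda>a. (\<phi> a, {a})) ` PA"
      then obtain a where a: "a \<in> PA" "t = (\<phi> a, {a})" by blast
      have c1: "\<phi> a \<in> Fcone B PB" using a conephi by blast
      have "f (\<phi> a) = g {a}" using fC gE a SPA.subset by auto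
      then show "t \<in> TC" using a c1 by (auto simp: TC_def pb_cone_def FconeA)
    qed
  qed
  have FconeB: "Fcone B PB = {Funit B (x \<otimes>\<^bsub>B\<^esub> inv\<^bsub>B\<^esub> y) | x y. x \<in> PB \<and> y \<in> PB}"
    by (rule fcone_eq[OF gB PBsub])
  have oneB: "\<one>\<^bsub>B\<^esub> \<in> PB" using submonoid.one_closed[OF smB] .
  have cone: "psi ` Fcone P PP = TC"
  proof
    show "psi ` Fcone P PP \<subseteq> TC"
    proof
      fix t assume "t \<in> psi ` Fcone P PP"
      then obtain c where c: "c \<in> Fcone P PP" "t = psi c" by (metis imageE)
      from c(1) obtain p q where pq0: "p \<in> PP" "q \<in> PP" "c = Funit P (p \<otimes>\<^bsub>P\<^esub> inv\<^bsub>P\<^esub> q)"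
        unfolding FconeP by blast
      have pq: "p \<in> PP" "q \<in> PP" "t = psi (Funit P (p \<otimes>\<^bsub>P\<^esub> inv\<^bsub>P\<^esub> q))" using pq0 c by simp_all
      have pqc: "p \<in> carrier P" "q \<in> carrier P" using pq PPsub by auto
      have sp: "snd p \<in> PA" "snd q \<in> PA" using pq by (auto simp: PP_def pb_cone_def)
      have "t = (\<phi> (snd p \<otimes>\<^bsub>A\<^esub> inv\<^bsub>A\<^esub> snd q), {snd p \<otimes>\<^bsub>A\<^esub> inv\<^bsub>A\<^esub> snd q})"
        using pq(3) comp[of "p \<otimes>\<^bsub>P\<^esub> inv\<^bsub>P\<^esub> q"] pqc by (simp add: HS.hom_mult HS.hom_inv)
      moreover have "snd p \<otimes>\<^bsub>A\<^esub> inv\<^bsub>A\<^esub> snd q \<in> PA" using sp by (simp add: SPA.m_closed SPA.m_inv_closed)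
      ultimately show "t \<in> TC" using TCeq by blast
    qed
    show "TC \<subseteq> psi ` Fcone P PP"
    proof
      fix t assume "t \<in> TC"
      then obtain a where a: "a \<in> PA" "t = (\<phi> a, {a})" using TCeq by blast
      have aA: "a \<in> carrier A" using a SPA.subset by auto
      have "\<phi> a \<in> Fcone B PB" using a conephi by blast
      then obtain x y where xy: "x \<in> PB" "y \<in> PB" "\<phi> a = Funit B (x \<otimes>\<^bsub>B\<^esub> inv\<^bsub>B\<^esub> y)"
        using FconeB by blast
      have xyc: "x \<in> carrier B" "y \<in> carrier B" using xy PBsub by auto
      have "Funit B y = Funit B (y \<otimes>\<^bsub>B\<^esub> inv\<^bsub>B\<^esub> \<one>\<^bsub>B\<^esub>)" using xyc by simp
      then have "Funit B y \<in> Fcone B PB" using FconeB xy oneB by blast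
      then have "Funit B y \<in> \<phi> ` PA" using conephi by simp
      then obtain a2 where a2: "a2 \<in> PA" "\<phi> a2 = Funit B y" by blast
      have a2A: "a2 \<in> carrier A" using a2 SPA.subset by auto
      have "\<phi> (a \<otimes>\<^bsub>A\<^esub> a2) = Funit B (x \<otimes>\<^bsub>B\<^esub> inv\<^bsub>B\<^esub> y) \<otimes>\<^bsub>FB\<^esub> Funit B y"
        using aA a2A xy a2 by simp
      also have "\<dots> = Funit B (x \<otimes>\<^bsub>B\<^esub> inv\<^bsub>B\<^esub> y \<otimes>\<^bsub>B\<^esub> y)" using xyc by simp
      also have "\<dots> = Funit B x" using xyc by (simp add: GB.m_assoc)
      finally have e: "\<phi> (a \<otimes>\<^bsub>A\<^esub> a2) = Funit B x" .
      define p where "p = (x, a \<otimes>\<^bsub>A\<^esub> a2)"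
      define q where "q = (y, a2)"
      have pPP: "p \<in> PP" using e xy a a2 by (simp add: p_def PP_def pb_cone_def SPA.m_closed)
      have qPP: "q \<in> PP" using xy a2 by (simp add: q_def PP_def pb_cone_def)
      have pqc: "p \<in> carrier P" "q \<in> carrier P" using pPP qPP PPsub by auto
      have "snd (p \<otimes>\<^bsub>P\<^esub> inv\<^bsub>P\<^esub> q) = a \<otimes>\<^bsub>A\<^esub> a2 \<otimes>\<^bsub>A\<^esub> inv\<^bsub>A\<^esub> a2"
        using pqc by (simp add: HS.hom_mult HS.hom_inv p_def q_def)
      also have "\<dots> = a" using aA a2A by (simp add: GA.m_assoc)
      finally have "psi (Funit P (p \<otimes>\<^bsub>P\<^esub> inv\<^bsub>P\<^esub> q)) = t"
        using comp[of "p \<otimes>\<^bsub>P\<^esub> inv\<^bsub>P\<^esub> q"] pqc a by simp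
      moreover have "Funit P (p \<otimes>\<^bsub>P\<^esub> inv\<^bsub>P\<^esub> q) \<in> Fcone P PP" using FconeP pPP qPP by blast
      ultimately show "t \<in> psi ` Fcone P PP" by blast
    qed
  qed
  have "pg_iso (Fobj P) (Fcone P PP) T TC psi"
    unfolding pg_iso_def bij_betw_def using homT inj surj cone by blast
  then show ?thesis unfolding P_def PP_def T_def TC_def psi_def f_def g_def FB_def .
qed

end
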